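(* Let $\Gamma$ be an extended Coxeter diagram with all vertex labels $p_i$ finite. If the Shephard group $G_\Gamma$ is finite, then the Hermitian form $H_\Gamma$ is positive definite.
   Context: An extended Coxeter diagram $\Gamma$ is a finite simplicial graph with vertex set $I$, labels $p_i\in\mathbb{Z}_{\ge2}\cup\{\infty\}$ on vertices and $m_{ij}\in\mathbb{Z}_{\ge3}\cup\{\infty\}$ on edges ($m_{ij}=2$ for non-edges, and $p_i=p_j$ whenever $m_{ij}$ is odd). $G_\Gamma=\langle s_i, i\in I\mid \mathrm{prod}(s_i,s_j;m_{ij})=\mathrm{prod}(s_j,s_i;m_{ij}),\ s_i^{p_i}=1\rangle$, with $\mathrm{prod}(a,b;m)$ the alternating word $aba\cdots$ of length $m$ (relations with $\infty$ omitted). For distinct $i,j$ joined by an edge set $\alpha_{ij}=-\left(\frac{\cos(\pi/p_i-\pi/p_j)+\cos(2\pi/m_{ij})}{2\sin(\pi/p_i)\sin(\pi/p_j)}\right)^{1/2}$; set $\alpha_{ii}=1$ and $\alpha_{ij}=0$ if $i\ne j$ are not joined by an edge. $H_\Gamma$ is the Hermitian form on $\mathbb{C}^I$ with basis $\{e_i\}$ given by $H_\Gamma(e_i,e_j)=\alpha_{ij}$. *)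

theory Defs
  imports Complex_Main "HOL-Library.Extended_Nat" "HOL-Library.Complex_Order"
begin

text \<open>An extended Coxeter diagram with finite vertex labels: vertex set I (finite),
  vertex labels p i (natural numbers \<ge> 2), edge labels m i j (extended naturals);
  m i j = 2 encodes a non-edge, an edge carries a label \<ge> 3 or infinity.\<close>

definition extended_coxeter_diagram :: "'a set \<Rightarrow> ('a \<Rightarrow> nat) \<Rightarrow> ('a \<Rightarrow> 'a \<Rightarrow> enat) \<Rightarrow> bool" where
  "extended_coxeter_diagram I p m \<longleftrightarrow>
     finite I \<and>
     (\<forall>i\<in>I. 2 \<le> p i) \<and>
     (\<forall>i\<in>I. \<forall>j\<in>I. i \<noteq> j \<longrightarrow> m i j = m j i \<and> 2 \<le> m i j) \<and>
     (\<forall>i\<in>I. \<forall>j\<in>I. \<forall>n. i \<noteq> j \<longrightarrow> m i j = enat n \<longrightarrow> odd n \<longrightarrow> p i = p j)"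

definition is_edge :: "('a \<Rightarrow> 'a \<Rightarrow> enat) \<Rightarrow> 'a \<Rightarrow> 'a \<Rightarrow> bool" where
  "is_edge m i j \<longleftrightarrow> i \<noteq> j \<and> m i j \<noteq> 2"

text \<open>Words in the generators and their inverses: (i, True) = s_i, (i, False) = s_i^-1.\<close>

definition alt_word :: "'a \<Rightarrow> 'a \<Rightarrow> nat \<Rightarrow> ('a \<times> bool) list" where
  "alt_word i j n = map (\<lambda>k. if even k then (i, True) else (j, True)) [0..<n]"

inductive shep_eq :: "'a set \<Rightarrow> ('a \<Rightarrow> nat) \<Rightarrow> ('a \<Rightarrow> 'a \<Rightarrow> enat) \<Rightarrow>
    ('a \<times> bool) list \<Rightarrow> ('a \<times> bool) list \<Rightarrow> bool"
  for I p m where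
  refl: "shep_eq I p m w w"
| sym: "shep_eq I p m u w \<Longrightarrow> shep_eq I p m w u"
| trans: "shep_eq I p m u v \<Longrightarrow> shep_eq I p m v w \<Longrightarrow> shep_eq I p m u w"
| cancel: "i \<in> I \<Longrightarrow> shep_eq I p m (u @ [(i, b), (i, \<not> b)] @ v) (u @ v)"
| power: "i \<in> I \<Longrightarrow> shep_eq I p m (u @ replicate (p i) (i, True) @ v) (u @ v)"
| braid: "i \<in> I \<Longrightarrow> j \<in> I \<Longrightarrow> i \<noteq> j \<Longrightarrow> m i j = enat n \<Longrightarrow>
           shep_eq I p m (u @ alt_word i j n @ v) (u @ alt_word j i n @ v)"

definition words_over :: "'a set \<Rightarrow> ('a \<times> bool) list set" where
  "words_over I = {w. set w \<subseteq> I \<times> UNIV}"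

definition shephard_group :: "'a set \<Rightarrow> ('a \<Rightarrow> nat) \<Rightarrow> ('a \<Rightarrow> 'a \<Rightarrow> enat) \<Rightarrow>
    ('a \<times> bool) list set set" where
  "shephard_group I p m =
     words_over I // {(u, w). u \<in> words_over I \<and> w \<in> words_over I \<and> shep_eq I p m u w}"

definition cos_2pi_over :: "enat \<Rightarrow> real" where
  "cos_2pi_over x = (case x of enat n \<Rightarrow> cos (2 * pi / real n) | \<infinity> \<Rightarrow> 1)"

definition alpha :: "('a \<Rightarrow> nat) \<Rightarrow> ('a \<Rightarrow> 'a \<Rightarrow> enat) \<Rightarrow> 'a \<Rightarrow> 'a \<Rightarrow> real" where
  "alpha p m i j =
     (if i = j then 1
      else if is_edge m i j then
        - sqrt ((cos (pi / real (p i) - pi / real (p j)) + cos_2pi_over (m i j))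
                 / (2 * sin (pi / real (p i)) * sin (pi / real (p j))))
      else 0)"

definition herm_form :: "'a set \<Rightarrow> ('a \<Rightarrow> nat) \<Rightarrow> ('a \<Rightarrow> 'a \<Rightarrow> enat) \<Rightarrow>
    ('a \<Rightarrow> complex) \<Rightarrow> ('a \<Rightarrow> complex) \<Rightarrow> complex" where
  "herm_form I p m v w = (\<Sum>i\<in>I. \<Sum>j\<in>I. complex_of_real (alpha p m i j) * v i * cnj (w j))"

definition pos_def_form :: "'a set \<Rightarrow> (('a \<Rightarrow> complex) \<Rightarrow> ('a \<Rightarrow> complex) \<Rightarrow> complex) \<Rightarrow> bool" where
  "pos_def_form I H \<longleftrightarrow> (\<forall>v. (\<exists>i\<in>I. v i \<noteq> 0) \<longrightarrow> 0 < H v v)"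

end

theory Submission
  imports Defs
begin

definition L1 :: "complex \<Rightarrow> complex \<Rightarrow> complex \<times> complex \<Rightarrow> complex \<times> complex" where
  "L1 a al z = (a * fst z, snd z + al * (a - 1) * fst z)"
definition L2 :: "complex \<Rightarrow> complex \<Rightarrow> complex \<times> complex \<Rightarrow> complex \<times> complex" where
  "L2 b al z = (fst z + al * (b - 1) * snd z, b * snd z)"

lemma CH_fst:
  "fst (L2 b al (L1 a al (L2 b al (L1 a al w)))) =
     (a + b + (a - 1) * (b - 1) * al\<^sup>2) * fst (L2 b al (L1 a al w)) - (a * b) * fst w"
  by (simp add: L1_def L2_def power2_eq_square algebra_simps)

lemma closed_form:
  fixes h :: "nat \<Rightarrow> complex"
  assumes rec: "\<And>l. h (Suc (Suc l)) = (l1 + l2) * h (Suc l) - (l1 * l2) * h l"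
  shows "(l1 - l2) * h l = (h 1 - l2 * h 0) * l1 ^ l - (h 1 - l1 * h 0) * l2 ^ l"
proof -
  have "(l1 - l2) * h l = (h 1 - l2 * h 0) * l1 ^ l - (h 1 - l1 * h 0) * l2 ^ l \<and>
        (l1 - l2) * h (Suc l) = (h 1 - l2 * h 0) * l1 ^ Suc l - (h 1 - l1 * h 0) * l2 ^ Suc l"
  proof (induction l)
    case 0
    then show ?case by (simp add: algebra_simps)
  next
    case (Suc l)
    then have A: "(l1 - l2) * h l = (h 1 - l2 * h 0) * l1 ^ l - (h 1 - l1 * h 0) * l2 ^ l"
      and B: "(l1 - l2) * h (Suc l) = (h 1 - l2 * h 0) * l1 ^ Suc l - (h 1 - l1 * h 0) * l2 ^ Suc l"
      by auto
    have "(l1 - l2) * h (Suc (Suc l)) = (l1 + l2) * ((l1 - l2) * h (Suc l)) - (l1 * l2) * ((l1 - l2) * h l)"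
      by (simp add: rec algebra_simps)
    also have "\<dots> = (h 1 - l2 * h 0) * l1 ^ Suc (Suc l) - (h 1 - l1 * h 0) * l2 ^ Suc (Suc l)"
      unfolding A B by (simp add: algebra_simps)
    finally show ?case using B by simp
  qed
  then show ?thesis by simp
qed

lemma closed_sum:
  fixes h :: "nat \<Rightarrow> complex"
  assumes rec: "\<And>l. h (Suc (Suc l)) = (l1 + l2) * h (Suc l) - (l1 * l2) * h l"
  shows "(l1 - l2) * (\<Sum>l<k. h l) = (h 1 - l2 * h 0) * (\<Sum>l<k. l1 ^ l) - (h 1 - l1 * h 0) * (\<Sum>l<k. l2 ^ l)"
proof -
  have "(l1 - l2) * (\<Sum>l<k. h l) = (\<Sum>l<k. (l1 - l2) * h l)" by (simp add: sum_distrib_left)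
  also have "\<dots> = (\<Sum>l<k. (h 1 - l2 * h 0) * l1 ^ l - (h 1 - l1 * h 0) * l2 ^ l)"
    using closed_form[of h l1 l2, OF rec] by simp
  also have "\<dots> = (h 1 - l2 * h 0) * (\<Sum>l<k. l1 ^ l) - (h 1 - l1 * h 0) * (\<Sum>l<k. l2 ^ l)"
    by (simp add: sum_subtractf sum_distrib_left)
  finally show ?thesis .
qed

lemma geo: "((l::complex) - 1) * (\<Sum>i<k. l ^ i) = l ^ k - 1"
  by (simp add: power_diff_1_eq)

lemma zero_seq:
  fixes h :: "nat \<Rightarrow> complex"
  assumes rec: "\<And>l. h (Suc (Suc l)) = t * h (Suc l) - d * h l" and "h 0 = 0" "h 1 = 0"
  shows "h l = 0"
proof -
  have "h l = 0 \<and> h (Suc l) = 0"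
    by (induction l) (use assms in auto)
  then show ?thesis by simp
qed

lemma comm2: "L2 b al ((((L1 a al) \<circ> (L2 b al)) ^^ l) z) = (((L2 b al) \<circ> (L1 a al)) ^^ l) (L2 b al z)"
  by (induction l) auto

lemma comm1: "L1 a al ((((L2 b al) \<circ> (L1 a al)) ^^ l) z) = (((L1 a al) \<circ> (L2 b al)) ^^ l) (L1 a al z)"
  by (induction l) auto

lemma rec_U:
  "fst ((((L2 b al) \<circ> (L1 a al)) ^^ (Suc (Suc l))) w) =
     (a + b + (a - 1) * (b - 1) * al\<^sup>2) * fst ((((L2 b al) \<circ> (L1 a al)) ^^ (Suc l)) w)
     - (a * b) * fst ((((L2 b al) \<circ> (L1 a al)) ^^ l) w)"
  using CH_fst[of b al a "(((L2 b al) \<circ> (L1 a al)) ^^ l) w"] by simp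

lemma even_core:
  fixes a b al l1 l2 :: complex
  assumes s: "l1 + l2 = a + b + (a - 1) * (b - 1) * al\<^sup>2" and pr: "l1 * l2 = a * b"
    and c: "al = 0 \<or> (l1 \<noteq> l2 \<and> l1 ^ k = l2 ^ k)"
  shows "(\<Sum>l<k. fst (L2 b al ((((L1 a al) \<circ> (L2 b al)) ^^ l) z))) =
         (\<Sum>l<k. fst ((((L2 b al) \<circ> (L1 a al)) ^^ l) z))"
proof -
  define U where "U = (L2 b al) \<circ> (L1 a al)"
  define d where "d l = fst ((U ^^ l) (L2 b al z)) - fst ((U ^^ l) z)" for l
  have rec: "d (Suc (Suc l)) = (l1 + l2) * d (Suc l) - (l1 * l2) * d l" for l
    unfolding d_def U_def s pr rec_U by (simp add: algebra_simps)
  have d0: "d 0 = al * (b - 1) * snd z" by (simp add: d_def L2_def)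
  have d1: "d 1 = al * (b - 1) * snd z * (a + b + (a - 1) * (b - 1) * al\<^sup>2 - 1)"
    by (simp add: d_def U_def L2_def L1_def power2_eq_square algebra_simps)
  have "(\<Sum>l<k. d l) = 0"
    using c
  proof
    assume "al = 0"
    then have "d l = 0" for l using zero_seq[of d, OF rec] d0 d1 by simp
    then show ?thesis by simp
  next
    assume c2: "l1 \<noteq> l2 \<and> l1 ^ k = l2 ^ k"
    have e1: "d 1 - l2 * d 0 = al * (b - 1) * snd z * (l1 - 1)"
      unfolding d0 d1 s[symmetric] by (simp add: algebra_simps)
    have e2: "d 1 - l1 * d 0 = al * (b - 1) * snd z * (l2 - 1)"
      unfolding d0 d1 s[symmetric] by (simp add: algebra_simps)
    have "(l1 - l2) * (\<Sum>l<k. d l) = al * (b - 1) * snd z * (((l1 - 1) * (\<Sum>l<k. l1 ^ l)) - ((l2 - 1) * (\<Sum>l<k. l2 ^ l)))"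
      unfolding closed_sum[of d l1 l2, OF rec] e1 e2 by (simp add: algebra_simps)
    also have "\<dots> = 0" unfolding geo using c2 by simp
    finally show ?thesis using c2 by simp
  qed
  then have "(\<Sum>l<k. fst ((U ^^ l) (L2 b al z))) = (\<Sum>l<k. fst ((U ^^ l) z))"
    unfolding d_def by (simp add: sum_subtractf)
  then show ?thesis unfolding comm2 U_def .
qed

lemma odd_core:
  fixes a al l1 l2 :: complex
  assumes s: "l1 + l2 = a + a + (a - 1) * (a - 1) * al\<^sup>2" and pr: "l1 * l2 = a * a"
    and c: "l1 \<noteq> l2" and c2: "l1 ^ k * (l1 - a) = l2 ^ k * (l2 - a)"
  shows "(\<Sum>l<Suc k. fst ((((L2 a al) \<circ> (L1 a al)) ^^ l) z)) =
         (\<Sum>l<k. fst (L2 a al ((((L1 a al) \<circ> (L2 a al)) ^^ l) z)))"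
proof -
  define U where "U = (L2 a al) \<circ> (L1 a al)"
  define d where "d l = fst ((U ^^ l) (U z)) - fst ((U ^^ l) (L2 a al z))" for l
  have rec: "d (Suc (Suc l)) = (l1 + l2) * d (Suc l) - (l1 * l2) * d l" for l
    unfolding d_def U_def s pr rec_U by (simp add: algebra_simps)
  have l2e: "l2 = a + a + (a - 1) * (a - 1) * al\<^sup>2 - l1" using s by (simp add: algebra_simps)
  have q: "l1 * l1 = (a + a + (a - 1) * (a - 1) * al\<^sup>2) * l1 - a * a"
    using pr unfolding l2e by (simp add: algebra_simps)
  have e1: "d 1 - l2 * d 0 = fst z * (l1 - 1) * (l1 - a)"
  proof -
    have "d 1 - l2 * d 0 - fst z * (l1 - 1) * (l1 - a) = - fst z * (l1 * l1 - (a + a + (a - 1) * (a - 1) * al\<^sup>2) * l1 + a * a)"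
      unfolding l2e d_def U_def by (simp add: L2_def L1_def power2_eq_square algebra_simps)
    then show ?thesis using q by simp
  qed
  have l1e: "l1 = a + a + (a - 1) * (a - 1) * al\<^sup>2 - l2" using s by (simp add: algebra_simps)
  have q2: "l2 * l2 = (a + a + (a - 1) * (a - 1) * al\<^sup>2) * l2 - a * a"
    using pr unfolding l1e by (simp add: algebra_simps)
  have e2: "d 1 - l1 * d 0 = fst z * (l2 - 1) * (l2 - a)"
  proof -
    have "d 1 - l1 * d 0 - fst z * (l2 - 1) * (l2 - a) = - fst z * (l2 * l2 - (a + a + (a - 1) * (a - 1) * al\<^sup>2) * l2 + a * a)"
      unfolding l1e d_def U_def by (simp add: L2_def L1_def power2_eq_square algebra_simps)
    then show ?thesis using q2 by simp
  qed
  have "(l1 - l2) * (\<Sum>l<k. d l) = fst z * (((l1 - 1) * (\<Sum>l<k. l1 ^ l)) * (l1 - a) - ((l2 - 1) * (\<Sum>l<k. l2 ^ l)) * (l2 - a))"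
    unfolding closed_sum[of d l1 l2, OF rec] e1 e2 by (simp add: algebra_simps)
  also have "\<dots> = fst z * ((l1 ^ k * (l1 - a) - l2 ^ k * (l2 - a)) - (l1 - l2))"
    unfolding geo by (simp add: algebra_simps)
  also have "\<dots> = (l1 - l2) * (- fst z)" using c2 by (simp add: algebra_simps)
  finally have "(l1 - l2) * (\<Sum>l<k. d l) = (l1 - l2) * (- fst z)" .
  then have sd: "(\<Sum>l<k. d l) = - fst z" using c by (metis mult_left_cancel right_minus_eq)
  have "(\<Sum>l<Suc k. fst ((U ^^ l) z)) = fst z + (\<Sum>l<k. fst ((U ^^ l) (U z)))"
    unfolding sum.lessThan_Suc_shift by (simp add: funpow_Suc_right del: funpow.simps)
  also have "\<dots> = (\<Sum>l<k. fst ((U ^^ l) (L2 a al z)))"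
    using sd unfolding d_def by (simp add: sum_subtractf algebra_simps)
  finally show ?thesis unfolding comm2 U_def .
qed

lemma cis_m1: "cis (2 * x) - 1 = cis x * (2 * \<i> * complex_of_real (sin x))"
  by (simp add: complex_eq_iff sin_double cos_double_sin) (simp add: power2_eq_square algebra_simps)

lemma cis_pm: "cis t + cis (- t) = complex_of_real (2 * cos t)"
  by (simp add: complex_eq_iff)

lemma cis_sum2: "cis (2 * x) + cis (2 * y) = cis (x + y) * complex_of_real (2 * cos (x - y))"
proof -
  have "cis (x + y) * complex_of_real (2 * cos (x - y)) = cis (x + y) * (cis (x - y) + cis (- (x - y)))"
    by (simp only: cis_pm)
  also have "\<dots> = cis (2 * x) + cis (2 * y)"
    by (simp add: distrib_left cis_mult)
  finally show ?thesis by simp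
qed

lemma lambda_sum:
  fixes x y Q th :: real
  assumes sx: "sin x \<noteq> 0" and sy: "sin y \<noteq> 0" and Q0: "Q \<ge> 0"
    and hQ: "Q = (cos (x - y) + cos th) / (2 * sin x * sin y)"
  shows "- cis (x + y) * cis th + - cis (x + y) * cis (- th) =
     cis (2 * x) + cis (2 * y) + (cis (2 * x) - 1) * (cis (2 * y) - 1) * (complex_of_real (- sqrt Q))\<^sup>2"
proof -
  have A2: "(complex_of_real (- sqrt Q))\<^sup>2 = complex_of_real Q"
    using Q0 by (simp flip: of_real_power)
  have Qm: "2 * sin x * sin y * Q = cos (x - y) + cos th" using sx sy hQ by simp
  have "(cis (2 * x) - 1) * (cis (2 * y) - 1) * complex_of_real Q
      = (cis x * cis y) * (2 * \<i>) * (2 * \<i>) * complex_of_real (sin x * sin y * Q)"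
    unfolding cis_m1 by (simp add: algebra_simps)
  also have "\<dots> = cis (x + y) * complex_of_real (- 2 * (2 * sin x * sin y * Q))"
    by (simp add: cis_mult algebra_simps)
  also have "\<dots> = cis (x + y) * complex_of_real (- 2 * (cos (x - y) + cos th))"
    unfolding Qm ..
  finally have t: "(cis (2 * x) - 1) * (cis (2 * y) - 1) * complex_of_real Q =
      cis (x + y) * complex_of_real (- 2 * (cos (x - y) + cos th))" .
  have "cis (2 * x) + cis (2 * y) + (cis (2 * x) - 1) * (cis (2 * y) - 1) * (complex_of_real (- sqrt Q))\<^sup>2
     = cis (x + y) * complex_of_real (2 * cos (x - y)) + cis (x + y) * complex_of_real (- 2 * (cos (x - y) + cos th))"
    unfolding A2 t cis_sum2 ..
  also have "\<dots> = - cis (x + y) * complex_of_real (2 * cos th)"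
    by (simp add: algebra_simps)
  also have "\<dots> = - cis (x + y) * cis th + - cis (x + y) * cis (- th)"
    unfolding cis_pm[symmetric] by (simp add: algebra_simps)
  finally show ?thesis by simp
qed

lemma lambda_prod:
  "(- cis (x + y) * cis th) * (- cis (x + y) * cis (- th)) = cis (2 * x) * cis (2 * y)"
  by (simp add: cis_mult algebra_simps)

lemma lambda_neq:
  assumes "sin th \<noteq> 0"
  shows "- cis (x + y) * cis th \<noteq> - cis (x + y) * cis (- th)"
proof
  assume "- cis (x + y) * cis th = - cis (x + y) * cis (- th)"
  then have "cis th = cis (- th)" by simp
  then have "Im (cis th) = Im (cis (- th))" by simp
  then show False using assms by simp
qed

lemma lambda_even:
  assumes "real n * th = 2 * pi" "n = 2 * k"
  shows "(- cis (x + y) * cis th) ^ k = (- cis (x + y) * cis (- th)) ^ k"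
proof -
  have "real k * th = pi" using assms by simp
  then have c: "cis (real k * th) = cis (real k * (- th))" by (simp add: complex_eq_iff)
  have L: "\<And>t. (- cis (x + y) * cis t) ^ k = (- cis (x + y)) ^ k * cis (real k * t)"
    by (simp only: power_mult_distrib DeMoivre)
  show ?thesis unfolding L c ..
qed

lemma lambda_odd:
  assumes "real n * th = 2 * pi" "n = 2 * k + 1"
  shows "(- cis (2 * x) * cis th) ^ k * (- cis (2 * x) * cis th - cis (2 * x)) =
         (- cis (2 * x) * cis (- th)) ^ k * (- cis (2 * x) * cis (- th) - cis (2 * x))"
proof -
  have e: "(2 * real k + 1) * th = 2 * pi" using assms by (simp add: add.commute)
  have c1: "cis (real (Suc k) * th) = cis (real k * (- th))"
  proof -
    have "real (Suc k) * th = real k * (- th) + 2 * pi" using e by (simp add: algebra_simps)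
    then have "cis (real (Suc k) * th) = cis (real k * (- th) + 2 * pi)" by simp
    also have "\<dots> = cis (real k * (- th))" by (simp only: cis_mult[symmetric] cis_2pi mult_1_right)
    finally show ?thesis .
  qed
  have c2: "cis (real k * th) = cis (real (Suc k) * (- th))"
  proof -
    have "real k * th = real (Suc k) * (- th) + 2 * pi" using e by (simp add: algebra_simps)
    then have "cis (real k * th) = cis (real (Suc k) * (- th) + 2 * pi)" by simp
    also have "\<dots> = cis (real (Suc k) * (- th))" by (simp only: cis_mult[symmetric] cis_2pi mult_1_right)
    finally show ?thesis .
  qed
  have L: "\<And>t. (- cis (2 * x) * cis t) ^ k * (- cis (2 * x) * cis t - cis (2 * x)) =
       (- cis (2 * x)) ^ Suc k * (cis (real (Suc k) * t) + cis (real k * t))"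
  proof -
    fix t
    have p: "(- cis (2 * x) * cis t) ^ k = (- cis (2 * x)) ^ k * cis (real k * t)"
      by (simp only: power_mult_distrib DeMoivre)
    have q: "cis (real (Suc k) * t) = cis (real k * t) * cis t"
      by (simp add: cis_mult distrib_right add.commute)
    show "(- cis (2 * x) * cis t) ^ k * (- cis (2 * x) * cis t - cis (2 * x)) =
       (- cis (2 * x)) ^ Suc k * (cis (real (Suc k) * t) + cis (real k * t))"
      unfolding p q by (simp add: algebra_simps)
  qed
  show ?thesis unfolding L c1 c2 by (simp add: algebra_simps)
qed

locale shep =
  fixes I :: "'a set" and p :: "'a \<Rightarrow> nat" and m :: "'a \<Rightarrow> 'a \<Rightarrow> enat"
  assumes ecd: "extended_coxeter_diagram I p m"
begin

lemma finI: "finite I" using ecd unfolding extended_coxeter_diagram_def by simp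
lemma p2: "i \<in> I \<Longrightarrow> 2 \<le> p i" using ecd unfolding extended_coxeter_diagram_def by simp
lemma msym: "i \<in> I \<Longrightarrow> j \<in> I \<Longrightarrow> i \<noteq> j \<Longrightarrow> m i j = m j i"
  using ecd unfolding extended_coxeter_diagram_def by simp
lemma m2: "i \<in> I \<Longrightarrow> j \<in> I \<Longrightarrow> i \<noteq> j \<Longrightarrow> 2 \<le> m i j"
  using ecd unfolding extended_coxeter_diagram_def by simp
lemma modd: "i \<in> I \<Longrightarrow> j \<in> I \<Longrightarrow> i \<noteq> j \<Longrightarrow> m i j = enat n \<Longrightarrow> odd n \<Longrightarrow> p i = p j"
  using ecd unfolding extended_coxeter_diagram_def by blast

definition zeta :: "'a \<Rightarrow> complex" where "zeta i = cis (2 * (pi / real (p i)))"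
definition al :: "'a \<Rightarrow> 'a \<Rightarrow> complex" where "al i j = complex_of_real (alpha p m i j)"
definition fi :: "'a \<Rightarrow> ('a \<Rightarrow> complex) \<Rightarrow> complex" where "fi i v = (\<Sum>k\<in>I. al k i * v k)"
definition rho :: "'a \<Rightarrow> ('a \<Rightarrow> complex) \<Rightarrow> ('a \<Rightarrow> complex)" where
  "rho i v = (\<lambda>k. v k + (if k = i then (zeta i - 1) * fi i v else 0))"
definition rhol :: "'a \<times> bool \<Rightarrow> ('a \<Rightarrow> complex) \<Rightarrow> ('a \<Rightarrow> complex)" where
  "rhol x = (if snd x then rho (fst x) else rho (fst x) ^^ (p (fst x) - 1))"
definition rw :: "('a \<times> bool) list \<Rightarrow> ('a \<Rightarrow> complex) \<Rightarrow> ('a \<Rightarrow> complex)" where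
  "rw w = foldr (\<lambda>x g. rhol x \<circ> g) w id"

lemma al_ii: "al i i = 1" by (simp add: al_def alpha_def)

lemma alpha_sym: "i \<in> I \<Longrightarrow> j \<in> I \<Longrightarrow> alpha p m i j = alpha p m j i"
proof -
  assume a: "i \<in> I" "j \<in> I"
  show ?thesis
  proof (cases "i = j")
    case False
    then have "m i j = m j i" using msym a by simp
    moreover have "cos (pi / real (p i) - pi / real (p j)) = cos (pi / real (p j) - pi / real (p i))"
      by (metis cos_minus minus_diff_eq)
    ultimately show ?thesis using False by (simp add: alpha_def is_edge_def mult.commute mult.left_commute)
  qed simp
qed

lemma al_sym: "i \<in> I \<Longrightarrow> j \<in> I \<Longrightarrow> al i j = al j i"
  by (simp add: al_def alpha_sym)

lemma fi_add: "i \<in> I \<Longrightarrow> fi l (\<lambda>k. v k + (if k = i then c else 0)) = fi l v + al i l * c"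
proof -
  assume i: "i \<in> I"
  have e: "(\<lambda>k. al k l * (v k + (if k = i then c else 0))) = (\<lambda>k. al k l * v k + (if k = i then al k l * c else 0))"
    by (auto simp: fun_eq_iff algebra_simps)
  show ?thesis unfolding fi_def e using finI i by (simp add: sum.distrib sum.delta)
qed

lemma fi_add2: "i \<in> I \<Longrightarrow> j \<in> I \<Longrightarrow>
   fi l (\<lambda>k. v k + (if k = i then c else 0) + (if k = j then d else 0)) = fi l v + al i l * c + al j l * d"
proof -
  assume i: "i \<in> I" and j: "j \<in> I"
  have "(\<lambda>k. al k l * (v k + (if k = i then c else 0) + (if k = j then d else 0))) =
     (\<lambda>k. al k l * v k + (if k = i then al k l * c else 0) + (if k = j then al k l * d else 0))"
    by (auto simp: fun_eq_iff algebra_simps)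
  note e = this
  show ?thesis unfolding fi_def e using finI i j by (simp add: sum.distrib sum.delta)
qed

lemma fi_rho_self: "i \<in> I \<Longrightarrow> fi i (rho i v) = zeta i * fi i v"
  unfolding rho_def by (simp add: fi_add al_ii algebra_simps)

lemma rho_pow:
  assumes i: "i \<in> I"
  shows "(rho i ^^ n) v = (\<lambda>k. v k + (if k = i then (zeta i ^ n - 1) * fi i v else 0))"
proof (induction n)
  case 0 then show ?case by (simp add: fun_eq_iff)
next
  case (Suc n)
  have f: "fi i ((rho i ^^ n) v) = zeta i ^ n * fi i v"
    unfolding Suc.IH using i by (simp add: fi_add al_ii algebra_simps)
  have "(rho i ^^ Suc n) v = rho i ((rho i ^^ n) v)" by simp
  also have "\<dots> = (\<lambda>k. (rho i ^^ n) v k + (if k = i then (zeta i - 1) * fi i ((rho i ^^ n) v) else 0))"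
    by (rule rho_def)
  also have "\<dots> = (\<lambda>k. v k + (if k = i then (zeta i ^ Suc n - 1) * fi i v else 0))"
    unfolding f unfolding Suc.IH by (auto simp: fun_eq_iff algebra_simps)
  finally show ?case .
qed

lemma zeta_p: "0 < p i \<Longrightarrow> zeta i ^ p i = 1"
  unfolding zeta_def DeMoivre by simp

lemma zeta_ne1: "i \<in> I \<Longrightarrow> zeta i \<noteq> 1"
proof
  assume i: "i \<in> I" and z: "zeta i = 1"
  have p: "2 \<le> p i" using p2 i by simp
  show False
  proof (cases "p i = 2")
    case True
    then show False using z unfolding zeta_def by (simp add: complex_eq_iff)
  next
    case False
    then have p3: "2 < p i" using p by simp
    have "0 < 2 * (pi / real (p i))" using p by simp
    moreover have "2 * (pi / real (p i)) < pi"
    proof -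
      have "2 * pi < real (p i) * pi" using p3 by simp
      then show ?thesis by (simp add: field_simps)
    qed
    ultimately have "sin (2 * (pi / real (p i))) > 0" by (rule sin_gt_zero)
    then show False using z unfolding zeta_def by (simp add: complex_eq_iff)
  qed
qed

lemma rho_p: "i \<in> I \<Longrightarrow> rho i ^^ p i = id"
proof -
  assume i: "i \<in> I"
  then have "0 < p i" using p2 by fastforce
  then show ?thesis using rho_pow[OF i] zeta_p by (simp add: fun_eq_iff)
qed

lemma rw_Nil: "rw [] = id" by (simp add: rw_def)
lemma rw_Cons: "rw (x # w) = rhol x \<circ> rw w" by (simp add: rw_def)
lemma rw_append: "rw (u @ w) = rw u \<circ> rw w"
  by (induction u) (simp_all add: rw_Nil rw_Cons)

lemma rw_replicate: "rw (replicate n x) = rhol x ^^ n"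
  by (induction n) (simp_all add: rw_Nil rw_Cons)

lemma rhol_cancel: "i \<in> I \<Longrightarrow> rhol (i, b) \<circ> rhol (i, \<not> b) = id"
proof -
  assume i: "i \<in> I"
  then have p: "Suc (p i - 1) = p i" using p2 by fastforce
  have "rho i \<circ> rho i ^^ (p i - 1) = id" using rho_p[OF i] p by (metis funpow.simps(2))
  moreover have "rho i ^^ (p i - 1) \<circ> rho i = id" using rho_p[OF i] p by (metis funpow_Suc_right)
  ultimately show ?thesis by (cases b) (simp_all add: rhol_def)
qed

end

lemma alt_word_Suc: "alt_word x y (Suc n) = (x, True) # alt_word y x n"
proof -
  have "[0..<Suc n] = 0 # map Suc [0..<n]" by (simp add: upt_conv_Cons map_Suc_upt)
  then show ?thesis unfolding alt_word_def by simp
qed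

lemma alt_word_0: "alt_word x y 0 = []" by (simp add: alt_word_def)

locale shep_pair = shep +
  fixes i j :: 'a
  assumes iI: "i \<in> I" and jI: "j \<in> I" and ij: "i \<noteq> j"
begin

definition Li where "Li = L1 (zeta i) (al i j)"
definition Lj where "Lj = L2 (zeta j) (al i j)"

definition W :: "bool \<Rightarrow> nat \<Rightarrow> ('a \<times> bool) list" where
  "W b n = alt_word (if b then i else j) (if b then j else i) n"

lemma W_Suc: "W b (Suc n) = ((if b then i else j), True) # W (\<not> b) n"
  unfolding W_def alt_word_Suc by simp

primrec Mst :: "bool \<Rightarrow> nat \<Rightarrow> complex \<times> complex \<Rightarrow> complex \<times> complex" where
  "Mst b 0 = id"
| "Mst b (Suc n) = (if b then Li else Lj) \<circ> Mst (\<not> b) n"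

primrec Dst :: "bool \<Rightarrow> nat \<Rightarrow> complex \<times> complex \<Rightarrow> complex \<times> complex" where
  "Dst b 0 z = (0, 0)"
| "Dst b (Suc n) z = (if b then (fst (Dst (\<not> b) n z) + (zeta i - 1) * fst (Mst (\<not> b) n z), snd (Dst (\<not> b) n z))
     else (fst (Dst (\<not> b) n z), snd (Dst (\<not> b) n z) + (zeta j - 1) * snd (Mst (\<not> b) n z)))"

lemma state:
  "rw (W b n) v = (\<lambda>k. v k + (if k = i then fst (Dst b n (fi i v, fi j v)) else 0)
                           + (if k = j then snd (Dst b n (fi i v, fi j v)) else 0)) \<and>
   (fi i (rw (W b n) v), fi j (rw (W b n) v)) = Mst b n (fi i v, fi j v)"
proof (induction n arbitrary: b)
  case 0
  then show ?case using ij by (simp add: W_def alt_word_0 rw_Nil fun_eq_iff)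
next
  case (Suc n)
  define z where "z = (fi i v, fi j v)"
  define v' where "v' = rw (W (\<not> b) n) v"
  have v'e: "v' = (\<lambda>k. v k + (if k = i then fst (Dst (\<not> b) n z) else 0)
                           + (if k = j then snd (Dst (\<not> b) n z) else 0))"
    and fv': "(fi i v', fi j v') = Mst (\<not> b) n z"
    using Suc.IH[of "\<not> b"] unfolding v'_def z_def by auto
  have fi': "fi i v' = fst (Mst (\<not> b) n z)" "fi j v' = snd (Mst (\<not> b) n z)"
    using fv' by (metis fst_conv, metis snd_conv)
  have rwe: "rw (W b (Suc n)) v = rho (if b then i else j) v'"
    unfolding W_Suc rw_Cons v'_def by (simp add: rhol_def)
  show ?case
  proof (cases b)
    case True
    have A: "rw (W b (Suc n)) v = (\<lambda>k. v k + (if k = i then fst (Dst b (Suc n) z) else 0)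
                           + (if k = j then snd (Dst b (Suc n) z) else 0))"
    proof -
      have "rw (W b (Suc n)) v = rho i v'" using rwe True by simp
      also have "\<dots> = (\<lambda>k. v' k + (if k = i then (zeta i - 1) * fst (Mst (\<not> b) n z) else 0))"
        unfolding rho_def fi' ..
      finally show ?thesis using True ij by (auto simp: v'e fun_eq_iff)
    qed
    have B: "fi i (rho i v') = zeta i * fi i v'" by (rule fi_rho_self[OF iI])
    have C: "fi j (rho i v') = fi j v' + al i j * ((zeta i - 1) * fi i v')"
      unfolding rho_def by (rule fi_add[OF iI])
    have "(fi i (rw (W b (Suc n)) v), fi j (rw (W b (Suc n)) v)) = Mst b (Suc n) z"
      unfolding rwe using True B C fi' by (simp add: Li_def L1_def algebra_simps)
    then show ?thesis using A unfolding z_def by simp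
  next
    case False
    have A: "rw (W b (Suc n)) v = (\<lambda>k. v k + (if k = i then fst (Dst b (Suc n) z) else 0)
                           + (if k = j then snd (Dst b (Suc n) z) else 0))"
    proof -
      have "rw (W b (Suc n)) v = rho j v'" using rwe False by simp
      also have "\<dots> = (\<lambda>k. v' k + (if k = j then (zeta j - 1) * snd (Mst (\<not> b) n z) else 0))"
        unfolding rho_def fi' ..
      finally show ?thesis using False ij by (auto simp: v'e fun_eq_iff)
    qed
    have B: "fi j (rho j v') = zeta j * fi j v'" by (rule fi_rho_self[OF jI])
    have C: "fi i (rho j v') = fi i v' + al j i * ((zeta j - 1) * fi j v')"
      unfolding rho_def by (rule fi_add[OF jI])
    have "(fi i (rw (W b (Suc n)) v), fi j (rw (W b (Suc n)) v)) = Mst b (Suc n) z"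
      unfolding rwe using False B C fi' al_sym[OF iI jI] by (simp add: Lj_def L2_def algebra_simps)
    then show ?thesis using A unfolding z_def by simp
  qed
qed

end

context shep_pair
begin

definition U where "U = Lj \<circ> Li"
definition U' where "U' = Li \<circ> Lj"

lemma Mst_even: "Mst b (2 * k) = (if b then U' else U) ^^ k"
  by (induction k) (auto simp: U_def U'_def)

lemma Dst_even:
  "fst (Dst True (2 * k) z) = (zeta i - 1) * (\<Sum>l<k. fst (Lj ((U' ^^ l) z))) \<and>
   snd (Dst True (2 * k) z) = (zeta j - 1) * (\<Sum>l<k. snd ((U' ^^ l) z)) \<and>
   fst (Dst False (2 * k) z) = (zeta i - 1) * (\<Sum>l<k. fst ((U ^^ l) z)) \<and>
   snd (Dst False (2 * k) z) = (zeta j - 1) * (\<Sum>l<k. snd (Li ((U ^^ l) z)))"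
proof (induction k)
  case 0 then show ?case by simp
next
  case (Suc k)
  have e: "2 * Suc k = Suc (Suc (2 * k))" by simp
  show ?case unfolding e using Suc by (simp add: Mst_even distrib_left)
qed

lemma swap_Li: "prod.swap (Li w) = L2 (zeta i) (al i j) (prod.swap w)"
  by (simp add: Li_def L1_def L2_def)
lemma swap_Lj: "prod.swap (Lj w) = L1 (zeta j) (al i j) (prod.swap w)"
  by (simp add: Lj_def L1_def L2_def)

lemma swap_U': "prod.swap ((U' ^^ l) z) = ((L2 (zeta i) (al i j) \<circ> L1 (zeta j) (al i j)) ^^ l) (prod.swap z)"
  by (induction l) (simp_all add: U'_def swap_Li swap_Lj)
lemma swap_U: "prod.swap ((U ^^ l) z) = ((L1 (zeta j) (al i j) \<circ> L2 (zeta i) (al i j)) ^^ l) (prod.swap z)"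
  by (induction l) (simp_all add: U_def swap_Li swap_Lj)

lemma snd_swap: "snd w = fst (prod.swap w)" by simp

lemma braid_from_D:
  assumes "\<And>z. Dst True n z = Dst False n z"
  shows "rw (W True n) = rw (W False n)"
proof
  fix v
  show "rw (W True n) v = rw (W False n) v"
  proof -
    define z where "z = (fi i v, fi j v)"
    have e: "Dst True n z = Dst False n z" by (rule assms)
    have "rw (W True n) v = (\<lambda>k. v k + (if k = i then fst (Dst True n z) else 0)
                           + (if k = j then snd (Dst True n z) else 0))"
      using state[of True n v] unfolding z_def by blast
    also have "\<dots> = (\<lambda>k. v k + (if k = i then fst (Dst False n z) else 0)
                           + (if k = j then snd (Dst False n z) else 0))"
      unfolding e ..
    also have "\<dots> = rw (W False n) v"
      using state[of False n v] unfolding z_def by simp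
    finally show ?thesis .
  qed
qed

lemma braid_even:
  fixes l1 l2 :: complex
  assumes n: "n = 2 * k"
    and s: "l1 + l2 = zeta i + zeta j + (zeta i - 1) * (zeta j - 1) * (al i j)\<^sup>2"
    and pr: "l1 * l2 = zeta i * zeta j"
    and c: "al i j = 0 \<or> (l1 \<noteq> l2 \<and> l1 ^ k = l2 ^ k)"
  shows "rw (W True n) = rw (W False n)"
proof (rule braid_from_D)
  fix z
  have A: "(\<Sum>l<k. fst (Lj ((U' ^^ l) z))) = (\<Sum>l<k. fst ((U ^^ l) z))"
    using even_core[OF s pr c, of z] by (simp add: U_def U'_def Li_def Lj_def)
  have s': "l1 + l2 = zeta j + zeta i + (zeta j - 1) * (zeta i - 1) * (al i j)\<^sup>2"
    using s by (simp add: algebra_simps)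
  have pr': "l1 * l2 = zeta j * zeta i" using pr by (simp add: algebra_simps)
  note B0 = even_core[OF s' pr' c, of "prod.swap z"]
  have B: "(\<Sum>l<k. snd ((U' ^^ l) z)) = (\<Sum>l<k. snd (Li ((U ^^ l) z)))"
    unfolding snd_swap swap_U' swap_U swap_Li using B0 by simp
  show "Dst True n z = Dst False n z"
    using Dst_even[of k z] A B unfolding n by (simp add: prod_eq_iff)
qed

lemma braid_odd:
  fixes l1 l2 :: complex
  assumes n: "n = 2 * k + 1" and zz: "zeta j = zeta i"
    and s: "l1 + l2 = zeta i + zeta i + (zeta i - 1) * (zeta i - 1) * (al i j)\<^sup>2"
    and pr: "l1 * l2 = zeta i * zeta i"
    and c: "l1 \<noteq> l2" and c2: "l1 ^ k * (l1 - zeta i) = l2 ^ k * (l2 - zeta i)"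
  shows "rw (W True n) = rw (W False n)"
proof (rule braid_from_D)
  fix z
  note O1 = odd_core[OF s pr c c2, of z]
  note O2 = odd_core[OF s pr c c2, of "prod.swap z"]
  have A: "(\<Sum>l<Suc k. fst ((U ^^ l) z)) = (\<Sum>l<k. fst (Lj ((U' ^^ l) z)))"
    using O1 zz by (simp add: U_def U'_def Li_def Lj_def)
  have B: "(\<Sum>l<k. snd (Li ((U ^^ l) z))) = (\<Sum>l<Suc k. snd ((U' ^^ l) z))"
    unfolding snd_swap swap_U' swap_U swap_Li using O2 zz by simp
  have e: "n = Suc (2 * k)" using n by simp
  show "Dst True n z = Dst False n z"
    using Dst_even[of k z] A B zz unfolding e by (simp add: prod_eq_iff Mst_even flip: distrib_left)
qed

end

context shep_pair
begin

lemma x_bounds: "k \<in> I \<Longrightarrow> 0 < pi / real (p k) \<and> pi / real (p k) \<le> pi / 2"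
proof -
  assume k: "k \<in> I"
  then have "2 \<le> p k" using p2 by simp
  then have r: "2 \<le> real (p k)" by linarith
  have "pi / real (p k) \<le> pi / 2" using r by (intro divide_left_mono) auto
  moreover have "0 < pi / real (p k)" using r by simp
  ultimately show ?thesis by simp
qed

lemma braid_pair:
  assumes mn: "m i j = enat n"
  shows "rw (W True n) = rw (W False n)"
proof -
  have n2: "2 \<le> n" using m2[OF iI jI ij] mn by (simp add: numeral_eq_enat)
  show ?thesis
  proof (cases "n = 2")
    case True
    then have "\<not> is_edge m i j" using mn by (simp add: is_edge_def numeral_eq_enat)
    then have a0: "al i j = 0" using ij by (simp add: al_def alpha_def)
    show ?thesis
      by (rule braid_even[of n 1 "zeta i" "zeta j"]) (use True a0 in simp_all)
  next
    case False
    then have n3: "3 \<le> n" using n2 by simp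
    then have edge: "is_edge m i j" using mn ij by (simp add: is_edge_def numeral_eq_enat)
    define x where "x = pi / real (p i)"
    define y where "y = pi / real (p j)"
    define th where "th = 2 * pi / real n"
    define Q where "Q = (cos (x - y) + cos th) / (2 * sin x * sin y)"
    have alij: "al i j = complex_of_real (- sqrt Q)"
      using edge ij mn unfolding al_def alpha_def Q_def x_def y_def th_def cos_2pi_over_def by simp
    have xb: "0 < x" "x \<le> pi / 2" using x_bounds[OF iI] x_def by auto
    have yb: "0 < y" "y \<le> pi / 2" using x_bounds[OF jI] y_def by auto
    have sx: "sin x > 0" using xb by (intro sin_gt_zero) auto
    have sy: "sin y > 0" using yb by (intro sin_gt_zero) auto
    have thb: "0 < th" "th < pi" using n3 unfolding th_def by (auto simp: field_simps)
    have sth: "sin th \<noteq> 0" using sin_gt_zero[OF thb] by simp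
    have num: "cos (x - y) + cos th \<ge> 0"
    proof (cases "odd n")
      case True
      then have "p i = p j" using modd[OF iI jI ij mn] by simp
      then have "x = y" unfolding x_def y_def by simp
      then have "cos (x - y) = 1" by simp
      then show ?thesis using cos_ge_minus_one[of th] by linarith
    next
      case False
      then have n4: "4 \<le> n" using n3 by presburger
      have "th \<le> pi / 2" unfolding th_def using n4 by (simp add: field_simps)
      then have "cos th \<ge> 0" using thb by (intro cos_ge_zero) auto
      moreover have "cos (x - y) \<ge> 0" using xb yb by (intro cos_ge_zero) auto
      ultimately show ?thesis by simp
    qed
    have Q0: "Q \<ge> 0" unfolding Q_def using num sx sy by simp
    have zi: "zeta i = cis (2 * x)" unfolding zeta_def x_def ..
    have zj: "zeta j = cis (2 * y)" unfolding zeta_def y_def ..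
    define l1 where "l1 = - cis (x + y) * cis th"
    define l2 where "l2 = - cis (x + y) * cis (- th)"
    have S: "l1 + l2 = zeta i + zeta j + (zeta i - 1) * (zeta j - 1) * (al i j)\<^sup>2"
      unfolding l1_def l2_def zi zj alij
      by (rule lambda_sum) (use sx sy Q0 Q_def in auto)
    have P: "l1 * l2 = zeta i * zeta j" unfolding l1_def l2_def zi zj by (rule lambda_prod)
    have N: "l1 \<noteq> l2" unfolding l1_def l2_def by (rule lambda_neq[OF sth])
    have nth: "real n * th = 2 * pi" unfolding th_def using n3 by simp
    show ?thesis
    proof (cases "even n")
      case True
      then obtain k where k: "n = 2 * k" by blast
      have "l1 ^ k = l2 ^ k" unfolding l1_def l2_def by (rule lambda_even[OF nth k])
      then show ?thesis using braid_even[OF k S P] N by blast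
    next
      case False
      then obtain k where k: "n = 2 * k + 1" by (metis oddE)
      have pe: "p i = p j" using modd[OF iI jI ij mn] False by simp
      then have xy: "y = x" unfolding x_def y_def by simp
      have zz: "zeta j = zeta i" using pe unfolding zeta_def by simp
      have xx: "x + x = 2 * x" by simp
      have S': "l1 + l2 = zeta i + zeta i + (zeta i - 1) * (zeta i - 1) * (al i j)\<^sup>2"
        using S zz by simp
      have P': "l1 * l2 = zeta i * zeta i" using P zz by simp
      have C2: "l1 ^ k * (l1 - zeta i) = l2 ^ k * (l2 - zeta i)"
        unfolding l1_def l2_def zi xy xx by (rule lambda_odd[OF nth k])
      show ?thesis by (rule braid_odd[OF k zz S' P' N C2])
    qed
  qed
qed

end

context shep
begin

lemma braid_rw:
  assumes "i \<in> I" "j \<in> I" "i \<noteq> j" "m i j = enat n"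
  shows "rw (alt_word i j n) = rw (alt_word j i n)"
proof -
  interpret shep_pair I p m i j by standard (use assms in auto)
  show ?thesis using braid_pair[OF assms(4)] unfolding W_def by simp
qed

lemma shep_eq_rw: "shep_eq I p m u w \<Longrightarrow> rw u = rw w"
proof (induction rule: shep_eq.induct)
  case (cancel i u b v)
  then have h: "\<And>x. rhol (i, b) (rhol (i, \<not> b) x) = x" using rhol_cancel[of i b] by (simp add: fun_eq_iff)
  show ?case by (simp add: rw_append rw_Cons rw_Nil h fun_eq_iff)
next
  case (power i u v)
  then show ?case by (simp add: rw_append rw_replicate rhol_def rho_p)
next
  case (braid i j n u v)
  then have "rw (alt_word i j n) = rw (alt_word j i n)" by (intro braid_rw)
  then show ?case by (simp add: rw_append)
qed simp_all

end

context shep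
begin

definition S :: "(('a \<Rightarrow> complex) \<Rightarrow> ('a \<Rightarrow> complex)) set" where "S = rw ` words_over I"

lemma S_finite:
  assumes fin: "finite (shephard_group I p m)"
  shows "finite S"
proof -
  define R where "R = {(u, w). u \<in> words_over I \<and> w \<in> words_over I \<and> shep_eq I p m u w}"
  have "S \<subseteq> (\<lambda>C. rw (SOME u. u \<in> C)) ` (words_over I // R)"
  proof
    fix g assume "g \<in> S"
    then obtain w where w: "w \<in> words_over I" "g = rw w" unfolding S_def by blast
    define C where "C = R `` {w}"
    have C: "C \<in> words_over I // R" unfolding C_def using w(1) by (rule quotientI)
    have "w \<in> C" unfolding C_def R_def using w(1) by (simp add: shep_eq.refl)
    then have "(SOME u. u \<in> C) \<in> C" by (rule someI)
    moreover define u where "u = (SOME u. u \<in> C)"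
    ultimately have "u \<in> C" by simp
    then have "(w, u) \<in> R" unfolding C_def by simp
    then have "shep_eq I p m w u" unfolding R_def by simp
    then have "rw u = g" using shep_eq_rw w(2) by simp
    then have "rw (SOME u. u \<in> C) = g" unfolding u_def .
    then show "g \<in> (\<lambda>C. rw (SOME u. u \<in> C)) ` (words_over I // R)" using C by force
  qed
  moreover have "finite (words_over I // R)" using fin unfolding shephard_group_def R_def .
  ultimately show ?thesis by (metis finite_surj)
qed

lemma id_S: "id \<in> S"
proof -
  have "[] \<in> words_over I" by (simp add: words_over_def)
  then show ?thesis unfolding S_def using rw_Nil by force
qed

lemma S_closed: "g \<in> S \<Longrightarrow> i \<in> I \<Longrightarrow> g \<circ> rho i \<in> S"
proof -
  assume g: "g \<in> S" and i: "i \<in> I"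
  then obtain w where w: "w \<in> words_over I" "g = rw w" unfolding S_def by blast
  have "w @ [(i, True)] \<in> words_over I" using w(1) i by (simp add: words_over_def)
  moreover have "rw (w @ [(i, True)]) = g \<circ> rho i" using w(2) by (simp add: rw_append rw_Cons rw_Nil rhol_def)
  ultimately show ?thesis unfolding S_def by force
qed

lemma rho_surj: "i \<in> I \<Longrightarrow> rho i (rhol (i, False) v) = v"
  using rhol_cancel[of i True] by (simp add: fun_eq_iff rhol_def)

lemma fi_lin: "fi i (\<lambda>k. a * x k + b * y k) = a * fi i x + b * fi i y"
  by (simp add: fi_def sum.distrib sum_distrib_left algebra_simps)

lemma rho_lin: "rho i (\<lambda>k. a * x k + b * y k) = (\<lambda>k. a * rho i x k + b * rho i y k)"
  by (simp add: rho_def fi_lin fun_eq_iff algebra_simps)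

lemma rhopow_lin: "(rho i ^^ n) (\<lambda>k. a * x k + b * y k) = (\<lambda>k. a * (rho i ^^ n) x k + b * (rho i ^^ n) y k)"
  by (induction n) (simp_all add: rho_lin)

lemma rw_lin: "rw w (\<lambda>k. a * x k + b * y k) = (\<lambda>k. a * rw w x k + b * rw w y k)"
  by (induction w) (simp_all add: rw_Nil rw_Cons rhol_def rho_lin rhopow_lin)

lemma S_lin: "g \<in> S \<Longrightarrow> g (\<lambda>k. a * x k + b * y k) = (\<lambda>k. a * g x k + b * g y k)"
  unfolding S_def using rw_lin by blast

definition K :: "('a \<Rightarrow> complex) \<Rightarrow> ('a \<Rightarrow> complex) \<Rightarrow> complex" where
  "K x y = (\<Sum>g\<in>S. \<Sum>k\<in>I. g x k * cnj (g y k))"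

lemma K_lin1: "K (\<lambda>k. a * x k + b * y k) z = a * K x z + b * K y z"
  unfolding K_def by (simp add: S_lin sum.distrib sum_distrib_left algebra_simps cong: sum.cong)

lemma K_conj: "K y x = cnj (K x y)"
  unfolding K_def by (simp add: mult.commute)

lemma K_lin2: "K z (\<lambda>k. a * x k + b * y k) = cnj a * K z x + cnj b * K z y"
proof -
  have "K z (\<lambda>k. a * x k + b * y k) = cnj (K (\<lambda>k. a * x k + b * y k) z)" by (rule K_conj)
  also have "\<dots> = cnj a * K z x + cnj b * K z y" unfolding K_lin1 by (simp add: K_conj[of z])
  finally show ?thesis .
qed

lemma K_inv:
  assumes fin: "finite S" and i: "i \<in> I"
  shows "K (rho i x) (rho i y) = K x y"
proof -
  define h where "h g = g \<circ> rho i" for g :: "('a \<Rightarrow> complex) \<Rightarrow> ('a \<Rightarrow> complex)"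
  have sub: "h ` S \<subseteq> S" unfolding h_def using S_closed i by blast
  have inj: "inj_on h S"
  proof
    fix g g' assume "g \<in> S" "g' \<in> S" "h g = h g'"
    then have "\<And>v. g (rho i v) = g' (rho i v)" unfolding h_def by (metis comp_apply)
    then have "\<And>v. g v = g' v" using rho_surj[OF i] by metis
    then show "g = g'" by blast
  qed
  have im: "h ` S = S" by (rule endo_inj_surj[OF fin sub inj])
  have "K x y = (\<Sum>g\<in>h ` S. \<Sum>k\<in>I. g x k * cnj (g y k))" unfolding K_def im ..
  also have "\<dots> = (\<Sum>g\<in>S. \<Sum>k\<in>I. h g x k * cnj (h g y k))" by (simp add: sum.reindex[OF inj])
  also have "\<dots> = K (rho i x) (rho i y)" unfolding K_def h_def by simp
  finally show ?thesis by simp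
qed

lemma K_pos:
  assumes fin: "finite S" and x: "\<exists>k\<in>I. x k \<noteq> 0"
  shows "\<exists>r>0. K x x = complex_of_real r"
proof -
  define r where "r = (\<Sum>g\<in>S. \<Sum>k\<in>I. (cmod (g x k))\<^sup>2)"
  have "K x x = complex_of_real r"
    unfolding K_def r_def of_real_sum complex_norm_square ..
  moreover have "r > 0"
  proof -
    obtain k0 where k0: "k0 \<in> I" "x k0 \<noteq> 0" using x by blast
    have "0 < (cmod (x k0))\<^sup>2" using k0 by simp
    also have "\<dots> \<le> (\<Sum>k\<in>I. (cmod (x k))\<^sup>2)"
      by (rule member_le_sum[where f = "\<lambda>k. (cmod (x k))\<^sup>2"]) (use k0 finI in auto)
    also have "\<dots> = (\<Sum>k\<in>I. (cmod (id x k))\<^sup>2)" by simp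
    also have "\<dots> \<le> r" unfolding r_def using id_S fin
      by (intro member_le_sum[where f = "\<lambda>g. \<Sum>k\<in>I. (cmod (g x k))\<^sup>2"]) (auto intro: sum_nonneg simp: id_def)
    finally show ?thesis .
  qed
  ultimately show ?thesis by blast
qed

end

context shep
begin

definition e :: "'a \<Rightarrow> 'a \<Rightarrow> complex" where "e i = (\<lambda>k. if k = i then 1 else 0)"

lemma fi_e: "j \<in> I \<Longrightarrow> fi i (e j) = al j i"
proof -
  assume j: "j \<in> I"
  have eq: "(\<lambda>k. al k i * e j k) = (\<lambda>k. if k = j then al k i else 0)" by (auto simp: e_def fun_eq_iff)
  show ?thesis unfolding fi_def eq using finI j by (simp add: sum.delta)
qed

lemma K_scal2: "K z (\<lambda>k. a * x k) = cnj a * K z x"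
  using K_lin2[of z a x 0 x] by simp

lemma K_e:
  assumes fin: "finite S" and i: "i \<in> I" and j: "j \<in> I"
  shows "K (e j) (e i) = al j i * K (e i) (e i)"
proof -
  define v' where "v' = (\<lambda>k. 1 * e j k + (- al j i) * e i k)"
  have f0: "fi i v' = 0" unfolding v'_def fi_lin fi_e[OF i] fi_e[OF j] al_ii by simp
  have r1: "rho i v' = v'" unfolding rho_def f0 by (simp add: fun_eq_iff)
  have r2: "rho i (e i) = (\<lambda>k. zeta i * e i k)"
    unfolding rho_def fi_e[OF i] al_ii by (auto simp: e_def fun_eq_iff)
  have "K v' (e i) = K (rho i v') (rho i (e i))" using K_inv[OF fin i] by simp
  also have "\<dots> = cnj (zeta i) * K v' (e i)" unfolding r1 r2 K_scal2 ..
  finally have "(1 - cnj (zeta i)) * K v' (e i) = 0" by (simp add: algebra_simps)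
  moreover have "cnj (zeta i) \<noteq> 1" using zeta_ne1[OF i] by (metis complex_cnj_one complex_cnj_cnj)
  ultimately have "K v' (e i) = 0" by simp
  moreover have "K v' (e i) = K (e j) (e i) - al j i * K (e i) (e i)"
    unfolding v'_def K_lin1 by simp
  ultimately show ?thesis by simp
qed

lemma K_sum1:
  assumes "finite L"
  shows "K (\<lambda>k. \<Sum>l\<in>L. c l * F l k) y = (\<Sum>l\<in>L. c l * K (F l) y)"
  using assms
proof (induction L rule: finite_induct)
  case empty
  have "(\<lambda>k. \<Sum>l\<in>{}. c l * F l k) = (\<lambda>k. 0 * y k + 0 * y k)" by simp
  then show ?case using K_lin1[of 0 y 0 y y] by simp
next
  case (insert a L)
  have "(\<lambda>k. \<Sum>l\<in>insert a L. c l * F l k) = (\<lambda>k. c a * F a k + 1 * (\<Sum>l\<in>L. c l * F l k))"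
    using insert by simp
  then show ?case using insert K_lin1[of "c a" "F a" 1 "\<lambda>k. \<Sum>l\<in>L. c l * F l k" y] by simp
qed

lemma K_sum2:
  assumes "finite L"
  shows "K y (\<lambda>k. \<Sum>l\<in>L. c l * F l k) = (\<Sum>l\<in>L. cnj (c l) * K y (F l))"
proof -
  have "K y (\<lambda>k. \<Sum>l\<in>L. c l * F l k) = cnj (K (\<lambda>k. \<Sum>l\<in>L. c l * F l k) y)" by (rule K_conj)
  also have "\<dots> = (\<Sum>l\<in>L. cnj (c l) * K y (F l))" unfolding K_sum1[OF assms] by (simp add: K_conj[of y])
  finally show ?thesis .
qed

lemma main_pos:
  assumes fin: "finite S"
  shows "pos_def_form I (herm_form I p m)"
  unfolding pos_def_form_def
proof (intro allI impI)
  fix v :: "'a \<Rightarrow> complex"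
  assume v: "\<exists>i\<in>I. v i \<noteq> 0"
  define r where "r i = Re (K (e i) (e i))" for i
  have kk: "K (e i) (e i) = complex_of_real (r i) \<and> r i > 0" if i: "i \<in> I" for i
  proof -
    have "\<exists>k\<in>I. e i k \<noteq> 0" using i by (auto simp: e_def)
    then obtain s where "s > 0" "K (e i) (e i) = complex_of_real s" using K_pos[OF fin] by blast
    then show ?thesis unfolding r_def by simp
  qed
  have Kee: "K (e l) (e l') = al l l' * complex_of_real (r l')" if "l \<in> I" "l' \<in> I" for l l'
    using K_e[OF fin that(2) that(1)] kk[OF that(2)] by simp
  have rsym: "r l = r l'" if l: "l \<in> I" and l': "l' \<in> I" and a: "alpha p m l l' \<noteq> 0" for l l'
  proof -
    have "K (e l) (e l') = cnj (K (e l') (e l))" by (rule K_conj)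
    then have "al l l' * complex_of_real (r l') = cnj (al l' l * complex_of_real (r l))"
      using Kee[OF l l'] Kee[OF l' l] by simp
    then have "al l l' * complex_of_real (r l') = al l l' * complex_of_real (r l)"
      using al_sym[OF l l'] by (simp add: al_def)
    then show ?thesis using a by (simp add: al_def)
  qed
  define u where "u k = (if k \<in> I then v k / complex_of_real (sqrt (r k)) else 0)" for k
  have ue: "u = (\<lambda>k. \<Sum>l\<in>I. u l * e l k)"
  proof
    fix k
    have eq: "(\<lambda>l. u l * e l k) = (\<lambda>l. if l = k then u k else 0)" by (auto simp: e_def fun_eq_iff)
    have "(\<Sum>l\<in>I. u l * e l k) = (if k \<in> I then u k else 0)" unfolding eq using finI by (simp add: sum.delta)
    then show "u k = (\<Sum>l\<in>I. u l * e l k)" by (simp add: u_def)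
  qed
  have Kuu: "K u u = (\<Sum>l\<in>I. \<Sum>l'\<in>I. u l * (cnj (u l') * K (e l) (e l')))"
  proof -
    have "K u u = (\<Sum>l\<in>I. u l * K (e l) u)" by (subst ue, subst K_sum1[OF finI], simp)
    also have "\<dots> = (\<Sum>l\<in>I. u l * (\<Sum>l'\<in>I. cnj (u l') * K (e l) (e l')))"
      by (subst ue, subst K_sum2[OF finI], simp)
    finally show ?thesis by (simp add: sum_distrib_left)
  qed
  have trm: "u l * (cnj (u l') * K (e l) (e l')) = complex_of_real (alpha p m l l') * v l * cnj (v l')"
    if l: "l \<in> I" and l': "l' \<in> I" for l l'
  proof (cases "alpha p m l l' = 0")
    case True
    then show ?thesis unfolding Kee[OF l l'] by (simp add: al_def)
  next
    case False
    have rr: "r l = r l'" by (rule rsym[OF l l' False])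
    have rp: "r l > 0" using kk[OF l] by simp
    have sq: "sqrt (r l) * sqrt (r l) = r l" using rp by simp
    have sq0: "sqrt (r l) \<noteq> 0" using rp by simp
    show ?thesis unfolding Kee[OF l l'] u_def using l l' rr sq sq0
      by (simp add: al_def field_simps flip: of_real_mult)
  qed
  have H: "herm_form I p m v v = K u u"
    unfolding Kuu herm_form_def using trm by (simp cong: sum.cong)
  obtain i where i: "i \<in> I" "v i \<noteq> 0" using v by blast
  have "r i > 0" using kk[OF i(1)] by simp
  then have "u i \<noteq> 0" using i by (simp add: u_def)
  then obtain s where s: "s > 0" "K u u = complex_of_real s" using K_pos[OF fin] i(1) by blast
  show "0 < herm_form I p m v v" unfolding H s(2) using s(1) by (simp add: less_complex_def)
qed

end

theorem proposition2p2:
  fixes I :: "'a set" and p :: "'a \<Rightarrow> nat" and m :: "'a \<Rightarrow> 'a \<Rightarrow> enat"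
  assumes "extended_coxeter_diagram I p m"
    and "finite (shephard_group I p m)"
  shows "pos_def_form I (herm_form I p m)"
proof -
  interpret shep I p m by standard (rule assms(1))
  show ?thesis by (rule main_pos[OF S_finite[OF assms(2)]])
qed

end
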